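(* Let $G$ be a maximal outerplanar graph of order $n\geq 3$, and let $t$ be the number of vertices of degree $2$ in $G$. Then $\gamma_{\times 2}(G)\leq \lfloor \frac{n+t}{2}\rfloor$. *)

theory Defs
  imports Main
begin

definition simple_graph :: "'a set \<Rightarrow> ('a \<Rightarrow> 'a \<Rightarrow> bool) \<Rightarrow> bool" where
  "simple_graph V E \<longleftrightarrow> finite V \<and>
     (\<forall>u v. E u v \<longrightarrow> u \<in> V \<and> v \<in> V \<and> u \<noteq> v \<and> E v u)"

text \<open>Outerplanar: the vertices can be placed in convex position (cyclic order
  given by a bijection onto positions 0..n-1) such that no two edges cross
  (one-page book embedding / convex drawing characterization).\<close>
definition outerplanar :: "'a set \<Rightarrow> ('a \<Rightarrow> 'a \<Rightarrow> bool) \<Rightarrow> bool" where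
  "outerplanar V E \<longleftrightarrow> simple_graph V E \<and>
     (\<exists>f :: 'a \<Rightarrow> nat. bij_betw f V {..<card V} \<and>
        (\<forall>a b c d. E a b \<longrightarrow> E c d \<longrightarrow> \<not> (f a < f c \<and> f c < f b \<and> f b < f d)))"

definition add_edge :: "('a \<Rightarrow> 'a \<Rightarrow> bool) \<Rightarrow> 'a \<Rightarrow> 'a \<Rightarrow> ('a \<Rightarrow> 'a \<Rightarrow> bool)" where
  "add_edge E u v = (\<lambda>x y. E x y \<or> (x = u \<and> y = v) \<or> (x = v \<and> y = u))"

definition maximal_outerplanar :: "'a set \<Rightarrow> ('a \<Rightarrow> 'a \<Rightarrow> bool) \<Rightarrow> bool" where
  "maximal_outerplanar V E \<longleftrightarrow> outerplanar V E \<and>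
     (\<forall>u\<in>V. \<forall>v\<in>V. u \<noteq> v \<and> \<not> E u v \<longrightarrow> \<not> outerplanar V (add_edge E u v))"

definition degree :: "'a set \<Rightarrow> ('a \<Rightarrow> 'a \<Rightarrow> bool) \<Rightarrow> 'a \<Rightarrow> nat" where
  "degree V E v = card {u \<in> V. E v u}"

definition closed_nbhd :: "'a set \<Rightarrow> ('a \<Rightarrow> 'a \<Rightarrow> bool) \<Rightarrow> 'a \<Rightarrow> 'a set" where
  "closed_nbhd V E v = insert v {u \<in> V. E v u}"

definition double_dominating :: "'a set \<Rightarrow> ('a \<Rightarrow> 'a \<Rightarrow> bool) \<Rightarrow> 'a set \<Rightarrow> bool" where
  "double_dominating V E S \<longleftrightarrow> S \<subseteq> V \<and> (\<forall>v\<in>V. card (closed_nbhd V E v \<inter> S) \<ge> 2)"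

definition double_domination_number :: "'a set \<Rightarrow> ('a \<Rightarrow> 'a \<Rightarrow> bool) \<Rightarrow> nat" where
  "double_domination_number V E = Min {card S | S. double_dominating V E S}"

end

theory Submission
  imports Defs
begin

definition b2i :: "bool \<Rightarrow> int" where "b2i b = (if b then 1 else 0)"

lemma card2I: "finite B \<Longrightarrow> x \<in> B \<Longrightarrow> y \<in> B \<Longrightarrow> x \<noteq> y \<Longrightarrow> 2 \<le> card B"
proof -
  assume a: "finite B" "x \<in> B" "y \<in> B" "x \<noteq> y"
  have "{x,y} \<subseteq> B" using a by auto
  hence "card {x,y} \<le> card B" using a(1) by (rule card_mono[rotated])
  thus ?thesis using a(4) by simp
qed

lemma sat_from:
  assumes "b2i pa + b2i pb + b2i pc + b2i pd + b2i pe \<ge> 2" "finite M"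
    "pa \<Longrightarrow> xa \<in> M" "pb \<Longrightarrow> xb \<in> M" "pc \<Longrightarrow> xc \<in> M" "pd \<Longrightarrow> xd \<in> M" "pe \<Longrightarrow> xe \<in> M"
    "pa \<Longrightarrow> pb \<Longrightarrow> xa \<noteq> xb" "pa \<Longrightarrow> pc \<Longrightarrow> xa \<noteq> xc" "pa \<Longrightarrow> pd \<Longrightarrow> xa \<noteq> xd" "pa \<Longrightarrow> pe \<Longrightarrow> xa \<noteq> xe"
    "pb \<Longrightarrow> pc \<Longrightarrow> xb \<noteq> xc" "pb \<Longrightarrow> pd \<Longrightarrow> xb \<noteq> xd" "pb \<Longrightarrow> pe \<Longrightarrow> xb \<noteq> xe"
    "pc \<Longrightarrow> pd \<Longrightarrow> xc \<noteq> xd" "pc \<Longrightarrow> pe \<Longrightarrow> xc \<noteq> xe" "pd \<Longrightarrow> pe \<Longrightarrow> xd \<noteq> xe"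
  shows "2 \<le> card M"
proof -
  have "(pa \<and> pb) \<or> (pa \<and> pc) \<or> (pa \<and> pd) \<or> (pa \<and> pe) \<or> (pb \<and> pc) \<or> (pb \<and> pd) \<or> (pb \<and> pe)
     \<or> (pc \<and> pd) \<or> (pc \<and> pe) \<or> (pd \<and> pe)"
    using assms(1) by (cases pa; cases pb; cases pc; cases pd; cases pe; simp add: b2i_def)
  thus ?thesis using assms by (metis card2I)
qed

type_synonym st = "bool \<times> bool \<times> bool \<times> bool"
definition valid :: "(st\<times>int) list \<Rightarrow> (st\<times>int) list \<Rightarrow> int \<Rightarrow> st\<times>int \<Rightarrow> bool" where
 "valid w1 w2 e x = (case x of ((si,sj,ci,cj),b) \<Rightarrow>
   list_ex (\<lambda>sk. list_ex (\<lambda>((a1,k1,c1i,c1k),b1). list_ex (\<lambda>((k2,a2,c2k,c2j),b2).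
     a1=si \<and> k1=sk \<and> k2=sk \<and> a2=sj \<and> b2i si + b2i sj + b2i sk + b2i c1k + b2i c2k \<ge> 2 \<and>
     (ci \<longrightarrow> c1i \<or> sk) \<and> (cj \<longrightarrow> c2j \<or> sk) \<and> b1+b2+2*b2i sk - 1 - e \<le> b) w2) w1) [False,True])"
definition triv_prof :: "(st\<times>int) list" where
 "triv_prof = [((False,False,False,False),0),((False,True,False,False),0),((True,False,False,False),0),((True,True,False,False),0)]"
definition WW :: "(st\<times>int) list list" where
 "WW = [[((True,True,False,False),-2)],
 [((False,True,False,False),0), ((False,True,True,False),0), ((False,True,True,True),0), ((True,False,False,False),0), ((True,False,False,True),0), ((True,False,True,False),0), ((True,False,True,True),0), ((True,True,False,False),-2)],
 [((False,True,False,False),-2), ((False,True,True,False),0), ((False,True,True,True),0), ((True,True,False,False),-2)],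
 [((True,False,False,False),-1), ((True,False,False,True),-1), ((True,False,True,False),-1), ((True,False,True,True),-1), ((True,True,False,False),-1)],
 [((False,False,False,False),0), ((False,False,False,True),0), ((False,False,True,False),0), ((False,False,True,True),0), ((False,True,False,False),0), ((False,True,False,True),0), ((False,True,True,False),0), ((False,True,True,True),0), ((True,False,False,False),0), ((True,False,False,True),0), ((True,False,True,False),0), ((True,False,True,True),0), ((True,True,False,False),0)],
 [((True,False,False,False),-2), ((True,False,False,True),0), ((True,False,True,False),-2), ((True,False,True,True),0), ((True,True,False,False),-2)],
 [((False,False,False,False),1), ((False,False,False,True),1), ((False,False,True,False),1), ((False,False,True,True),1), ((False,True,False,False),-1), ((False,True,False,True),-1), ((False,True,True,False),1), ((False,True,True,True),1), ((True,False,False,False),-1), ((True,False,False,True),-1), ((True,False,True,False),1), ((True,False,True,True),1), ((True,True,False,False),-1)],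
 [((False,False,False,False),1), ((False,False,False,True),1), ((False,False,True,False),1), ((False,False,True,True),1), ((False,True,False,False),-1), ((False,True,True,False),-1), ((False,True,True,True),1), ((True,False,False,False),-1), ((True,False,False,True),1), ((True,False,True,False),-1), ((True,False,True,True),1), ((True,True,False,False),-1)],
 [((False,True,False,False),-1), ((False,True,False,True),-1), ((False,True,True,False),-1), ((False,True,True,True),-1), ((True,True,False,False),-1)]]"
definition flagged :: "((st\<times>int) list \<times> bool) list" where
 "flagged = (triv_prof,True) # map (\<lambda>w. (w,False)) WW"
definition closed_chk :: bool where
 "closed_chk = list_all (\<lambda>(w1,t1). list_all (\<lambda>(w2,t2). list_ex (\<lambda>w. list_all (valid w1 w2 (b2i (t1 \<and> t2))) w) WW) flagged) flagged"
definition top_chk :: bool where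
 "top_chk = list_all (\<lambda>(w1,t1). list_all (\<lambda>(w2,t2).
    list_ex (\<lambda>s0. list_ex (\<lambda>sk. list_ex (\<lambda>sn. list_ex (\<lambda>((a1,k1,c10,c1k),b1). list_ex (\<lambda>((k2,a2,c2k,c2n),b2).
     a1=s0 \<and> k1=sk \<and> k2=sk \<and> a2=sn \<and> b2i s0 + b2i sk + b2i sn + b2i c1k + b2i c2k \<ge> 2 \<and>
     b2i s0 + b2i sk + b2i sn + b2i c10 \<ge> 2 \<and> b2i s0 + b2i sk + b2i sn + b2i c2n \<ge> 2 \<and>
     2*(b2i s0 + b2i sk + b2i sn) + b1 + b2 \<le> 3 + b2i t1 + b2i t2 + b2i (t1 \<and> t2)) w2) w1) [False,True]) [False,True]) [False,True]) flagged) flagged"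
lemma closed: closed_chk by code_simp
lemma topc: top_chk by code_simp

locale poly =
  fixes n :: nat and R :: "nat \<Rightarrow> nat \<Rightarrow> bool"
  assumes Rdom: "R i j \<Longrightarrow> i < n \<and> j < n \<and> i \<noteq> j"
  and Rsym: "R i j \<Longrightarrow> R j i"
  and noncross: "R a b \<Longrightarrow> R c d \<Longrightarrow> \<not> (a < c \<and> c < b \<and> b < d)"
  and maxl: "i < n \<Longrightarrow> j < n \<Longrightarrow> i \<noteq> j \<Longrightarrow>
     (\<And>a b. R a b \<Longrightarrow> \<not>(a < i \<and> i < b \<and> b < j) \<and> \<not>(a < j \<and> j < b \<and> b < i)
         \<and> \<not>(i < a \<and> a < j \<and> j < b) \<and> \<not>(j < a \<and> a < i \<and> i < b)) \<Longrightarrow> R i j"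
begin

definition nb :: "nat \<Rightarrow> nat set" where "nb v = {u. R v u}"
definition deg :: "nat \<Rightarrow> nat" where "deg v = card (nb v)"
definition ears :: "nat set \<Rightarrow> nat" where "ears A = card {v\<in>A. deg v = 2}"
definition sat :: "nat set \<Rightarrow> nat \<Rightarrow> bool" where
  "sat T v \<longleftrightarrow> 2 \<le> card (insert v (nb v) \<inter> T)"
definition realizes :: "nat \<Rightarrow> nat \<Rightarrow> bool \<Rightarrow> bool \<Rightarrow> bool \<Rightarrow> bool \<Rightarrow> int \<Rightarrow> bool" where
  "realizes i j si sj ci cj b \<longleftrightarrow> (\<exists>S. S \<subseteq> {i<..<j} \<and>
     (\<forall>v\<in>{i<..<j}. sat (S \<union> {x. x = i \<and> si} \<union> {x. x = j \<and> sj}) v) \<and>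
     (ci \<longrightarrow> (\<exists>u\<in>S. R i u)) \<and> (cj \<longrightarrow> (\<exists>u\<in>S. R j u)) \<and>
     2 * int (card S) \<le> int (card {i<..<j}) + int (ears {i<..<j}) + b)"

lemma nb_sub: "nb v \<subseteq> {..<n}" using Rdom by (auto simp: nb_def)
lemma finite_nb[simp]: "finite (nb v)" using nb_sub finite_subset by blast
lemma finite_M[simp]: "finite (insert v (nb v) \<inter> T)" by simp

lemma consec: "Suc i < n \<Longrightarrow> R i (Suc i)"
  by (rule maxl) auto

lemma first_last: "2 \<le> n \<Longrightarrow> R 0 (n - 1)"
  by (rule maxl) (auto dest: Rdom)

lemma inside: "R i j \<Longrightarrow> i < v \<Longrightarrow> v < j \<Longrightarrow> R v w \<Longrightarrow> i \<le> w \<and> w \<le> j"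
proof (rule ccontr)
  assume a: "R i j" "i < v" "v < j" "R v w" "\<not> (i \<le> w \<and> w \<le> j)"
  show False
  proof (cases "w < i")
    case True
    then show False using noncross[OF Rsym[OF a(4)] a(1)] a by auto
  next
    case False
    then have "j < w" using a by auto
    then show False using noncross[OF a(1) a(4)] a by auto
  qed
qed

lemma nb_inside: "R i j \<Longrightarrow> i < v \<Longrightarrow> v < j \<Longrightarrow> insert v (nb v) \<subseteq> {i..j}"
  using inside by (auto simp: nb_def)

lemma apex:
  assumes "R i j" "Suc i < j"
  shows "\<exists>k. i < k \<and> k < j \<and> R i k \<and> R k j"
proof -
  let ?K = "{k. i < k \<and> k < j \<and> R i k}"
  have jn: "j < n" using Rdom assms(1) by auto
  have "Suc i \<in> ?K" using consec[of i] assms jn by auto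
  moreover have fin: "finite ?K" by (rule finite_subset[of _ "{..<j}"]) auto
  ultimately have ne: "?K \<noteq> {}" by blast
  define k where "k = Max ?K"
  have kK: "k \<in> ?K" unfolding k_def using Max_in[OF fin ne] .
  have kmax: "\<And>b. b \<in> ?K \<Longrightarrow> b \<le> k" unfolding k_def using Max_ge[OF fin] by blast
  have "R k j"
  proof (rule maxl)
    show "k < n" "j < n" "k \<noteq> j" using kK jn by auto
    fix a b assume ab: "R a b"
    have c1: "\<not>(a < k \<and> k < b \<and> b < j)"
    proof
      assume h: "a < k \<and> k < b \<and> b < j"
      consider "a < i" | "a = i" | "i < a" by linarith
      then show False
      proof cases
        case 1 then show ?thesis using noncross[OF ab assms(1)] h kK by auto
      next
        case 2 then have "b \<in> ?K" using h ab kK by auto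
        then show ?thesis using kmax h by force
      next
        case 3 then show ?thesis using noncross[of i k a b] kK ab h by auto
      qed
    qed
    have c3: "\<not>(k < a \<and> a < j \<and> j < b)"
      using noncross[OF assms(1) ab] kK by auto
    show "\<not>(a < k \<and> k < b \<and> b < j) \<and> \<not>(a < j \<and> j < b \<and> b < k)
         \<and> \<not>(k < a \<and> a < j \<and> j < b) \<and> \<not>(j < a \<and> a < k \<and> k < b)"
      using c1 c3 kK by auto
  qed
  thus ?thesis using kK by blast
qed

lemma ear_apex:
  assumes "R i k" "R k j" "R i j" "k = Suc i" "j = Suc k"
  shows "deg k = 2"
proof -
  have "nb k = {i, j}"
  proof
    show "nb k \<subseteq> {i, j}"
    proof
      fix w assume "w \<in> nb k"
      then have "R k w" by (simp add: nb_def)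
      then have "i \<le> w \<and> w \<le> j" "w \<noteq> k" using inside[OF assms(3), of k w] assms Rdom by auto
      then show "w \<in> {i, j}" using assms by auto
    qed
    show "{i, j} \<subseteq> nb k" using assms Rsym by (auto simp: nb_def)
  qed
  thus ?thesis using assms by (simp add: deg_def)
qed

lemma trivial: "realizes i (Suc i) si sj False False 0"
  unfolding realizes_def by (rule exI[of _ "{}"]) auto

lemma sat_local:
  assumes "insert v (nb v) \<subseteq> A" "T \<inter> A = T' \<inter> A" "sat T' v"
  shows "sat T v"
proof -
  have "insert v (nb v) \<inter> T = insert v (nb v) \<inter> T'" using assms(1,2) by blast
  thus ?thesis using assms(3) by (simp add: sat_def)
qed

lemma card_S3:
  fixes i k j :: nat
  assumes "S1 \<subseteq> {i<..<k}" "S2 \<subseteq> {k<..<j}"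
  shows "card (S1 \<union> S2 \<union> {x. x = k \<and> sk}) = card S1 + card S2 + (if sk then 1 else 0)"
proof -
  have f1: "finite S1" "finite S2" using assms by (meson finite_greaterThanLessThan finite_subset)+
  have d: "S1 \<inter> S2 = {}" "(S1 \<union> S2) \<inter> {x. x = k \<and> sk} = {}" using assms by (fastforce simp: subset_iff)+
  have "card (S1 \<union> S2 \<union> {x. x = k \<and> sk}) = card (S1 \<union> S2) + card {x. x = k \<and> sk}"
    by (rule card_Un_disjoint) (use f1 d in auto)
  also have "card (S1 \<union> S2) = card S1 + card S2" by (rule card_Un_disjoint) (use f1 d in auto)
  also have "card {x. x = k \<and> sk} = (if sk then 1 else 0)" by auto
  finally show ?thesis .
qed

lemma card_I3:
  fixes i k j :: nat
  assumes "i < k" "k < j"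
  shows "card {i<..<j} = card {i<..<k} + card {k<..<j} + 1"
  using assms by (simp add: card_greaterThanLessThan)

lemma ears_I3:
  fixes i k j :: nat
  assumes "i < k" "k < j" "e = 0 \<or> (e = 1 \<and> deg k = 2)"
  shows "int (ears {i<..<k}) + int (ears {k<..<j}) + e \<le> int (ears {i<..<j})"
proof -
  let ?A = "{v\<in>{i<..<k}. deg v = 2}" and ?B = "{v\<in>{k<..<j}. deg v = 2}"
  let ?C = "{x. x = k \<and> e = 1}"
  have sub: "?A \<union> ?B \<union> ?C \<subseteq> {v\<in>{i<..<j}. deg v = 2}" using assms by auto
  have "card (?A \<union> ?B \<union> ?C) = card ?A + card ?B + card ?C"
    by (subst card_Un_disjoint; (subst card_Un_disjoint)?) auto
  moreover have "card ?C = nat e" using assms(3) by auto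
  moreover have "card (?A \<union> ?B \<union> ?C) \<le> card {v\<in>{i<..<j}. deg v = 2}"
    by (rule card_mono[OF _ sub]) auto
  ultimately show ?thesis using assms(3) unfolding ears_def by auto
qed

lemma compose:
  assumes ik: "i < k" and kj: "k < j" and Rik: "R i k" and Rkj: "R k j" and Rij: "R i j"
    and r1: "realizes i k si sk c1i c1k b1" and r2: "realizes k j sk sj c2k c2j b2"
    and cnt: "b2i si + b2i sj + b2i sk + b2i c1k + b2i c2k \<ge> 2"
    and dci: "ci \<longrightarrow> c1i \<or> sk" and dcj: "cj \<longrightarrow> c2j \<or> sk"
    and e: "e = 0 \<or> (e = 1 \<and> deg k = 2)"
  shows "realizes i j si sj ci cj (b1 + b2 + 2 * b2i sk - 1 - e)"
proof -
  obtain S1 where S1: "S1 \<subseteq> {i<..<k}"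
    "\<forall>v\<in>{i<..<k}. sat (S1 \<union> {x. x = i \<and> si} \<union> {x. x = k \<and> sk}) v"
    "c1i \<longrightarrow> (\<exists>u\<in>S1. R i u)" "c1k \<longrightarrow> (\<exists>u\<in>S1. R k u)"
    "2 * int (card S1) \<le> int (card {i<..<k}) + int (ears {i<..<k}) + b1"
    using r1 unfolding realizes_def by blast
  obtain S2 where S2: "S2 \<subseteq> {k<..<j}"
    "\<forall>v\<in>{k<..<j}. sat (S2 \<union> {x. x = k \<and> sk} \<union> {x. x = j \<and> sj}) v"
    "c2k \<longrightarrow> (\<exists>u\<in>S2. R k u)" "c2j \<longrightarrow> (\<exists>u\<in>S2. R j u)"
    "2 * int (card S2) \<le> int (card {k<..<j}) + int (ears {k<..<j}) + b2"
    using r2 unfolding realizes_def by blast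
  define S where "S = S1 \<union> S2 \<union> {x. x = k \<and> sk}"
  define T where "T = S \<union> {x. x = i \<and> si} \<union> {x. x = j \<and> sj}"
  have Ssub: "S \<subseteq> {i<..<j}" using S1(1) S2(1) ik kj by (auto simp: S_def)
  have satI1: "sat T v" if v: "v \<in> {i<..<k}" for v
  proof (rule sat_local[where A="{i..k}"])
    show "insert v (nb v) \<subseteq> {i..k}" using nb_inside[OF Rik] v by auto
    show "T \<inter> {i..k} = (S1 \<union> {x. x = i \<and> si} \<union> {x. x = k \<and> sk}) \<inter> {i..k}"
      using S1(1) S2(1) ik kj by (auto simp: T_def S_def)
    show "sat (S1 \<union> {x. x = i \<and> si} \<union> {x. x = k \<and> sk}) v" using S1(2) v by blast
  qed
  have satI2: "sat T v" if v: "v \<in> {k<..<j}" for v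
  proof (rule sat_local[where A="{k..j}"])
    show "insert v (nb v) \<subseteq> {k..j}" using nb_inside[OF Rkj] v by auto
    show "T \<inter> {k..j} = (S2 \<union> {x. x = k \<and> sk} \<union> {x. x = j \<and> sj}) \<inter> {k..j}"
      using S1(1) S2(1) ik kj by (auto simp: T_def S_def)
    show "sat (S2 \<union> {x. x = k \<and> sk} \<union> {x. x = j \<and> sj}) v" using S2(2) v by blast
  qed
  obtain u1 where u1: "c1k \<Longrightarrow> u1 \<in> S1 \<and> R k u1" using S1(4) by blast
  obtain u2 where u2: "c2k \<Longrightarrow> u2 \<in> S2 \<and> R k u2" using S2(3) by blast
  have disj: "S1 \<inter> S2 = {}" using S1(1) S2(1) by (fastforce simp: subset_iff)
  have satk: "sat T k"
    unfolding sat_def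
  proof (rule sat_from[where pa=sk and xa=k and pb=si and xb=i and pc=sj and xc=j and pd=c1k and xd=u1
        and pe=c2k and xe=u2])
    show "b2i sk + b2i si + b2i sj + b2i c1k + b2i c2k \<ge> 2" using cnt by simp
    show "finite (insert k (nb k) \<inter> T)" by simp
  qed (use ik kj Rik Rkj Rsym u1 u2 S1(1) S2(1) disj in \<open>auto simp: T_def S_def nb_def\<close>)
  have satall: "\<forall>v\<in>{i<..<j}. sat T v"
  proof
    fix v assume v: "v \<in> {i<..<j}"
    consider "v \<in> {i<..<k}" | "v = k" | "v \<in> {k<..<j}" using v by fastforce
    then show "sat T v" using satI1 satI2 satk by cases auto
  qed
  have ci: "ci \<longrightarrow> (\<exists>u\<in>S. R i u)" using dci S1(3) Rik by (auto simp: S_def)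
  have cj: "cj \<longrightarrow> (\<exists>u\<in>S. R j u)" using dcj S2(4) Rkj Rsym by (auto simp: S_def)
  have cS: "card S = card S1 + card S2 + (if sk then 1 else 0)"
    unfolding S_def by (rule card_S3[OF S1(1) S2(1)])
  have cI: "card {i<..<j} = card {i<..<k} + card {k<..<j} + 1" using card_I3[OF ik kj] .
  have eI: "int (ears {i<..<k}) + int (ears {k<..<j}) + e \<le> int (ears {i<..<j})"
    using ears_I3[OF ik kj e] .
  have "2 * int (card S) \<le> int (card {i<..<j}) + int (ears {i<..<j}) + (b1 + b2 + 2 * b2i sk - 1 - e)"
    using S1(5) S2(5) cS cI eI by (auto simp: b2i_def)
  then show ?thesis unfolding realizes_def
    using Ssub satall ci cj unfolding T_def by blast
qed

lemma end0:
  assumes "3 \<le> n" "R 1 (n - 1)"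
  shows "deg 0 = 2"
proof -
  have "nb 0 = {1, n - 1}"
  proof
    show "nb 0 \<subseteq> {1, n - 1}"
    proof
      fix w assume "w \<in> nb 0"
      then have w: "R 0 w" by (simp add: nb_def)
      then have "w < n" "w \<noteq> 0" using Rdom[of 0 w] by auto
      moreover have "\<not> (1 < w \<and> w < n - 1)" using noncross[OF w assms(2)] by auto
      ultimately show "w \<in> {1, n - 1}" by auto
    qed
    show "{1, n - 1} \<subseteq> nb 0" using consec[of 0] first_last assms by (auto simp: nb_def)
  qed
  thus ?thesis using assms by (simp add: deg_def)
qed

lemma endn:
  assumes "3 \<le> n" "R 0 (n - 2)"
  shows "deg (n - 1) = 2"
proof -
  have "nb (n - 1) = {0, n - 2}"
  proof
    show "nb (n - 1) \<subseteq> {0, n - 2}"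
    proof
      fix w assume "w \<in> nb (n - 1)"
      then have w: "R (n - 1) w" by (simp add: nb_def)
      then have "w < n" "w \<noteq> n - 1" using Rdom by auto
      moreover have "\<not> (0 < w \<and> w < n - 2)" using noncross[OF assms(2) Rsym[OF w]] assms by auto
      ultimately show "w \<in> {0, n - 2}" by auto
    qed
    have "R (n - 2) (n - 1)" using consec[of "n - 2"] assms by (simp add: Suc_diff_Suc numeral_2_eq_2)
    then show "{0, n - 2} \<subseteq> nb (n - 1)" using first_last assms Rsym by (auto simp: nb_def)
  qed
  thus ?thesis using assms by (simp add: deg_def)
qed

lemma top_combine:
  assumes n3: "3 \<le> n" and k0: "0 < k" and kn: "k < n - 1" and R0k: "R 0 k" and Rkn: "R k (n - 1)"
    and r1: "realizes 0 k s0 sk c10 c1k b1" and r2: "realizes k (n - 1) sk sn c2k c2n b2"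
    and cntk: "b2i s0 + b2i sn + b2i sk + b2i c1k + b2i c2k \<ge> 2"
    and cnt0: "b2i s0 + b2i sk + b2i sn + b2i c10 \<ge> 2"
    and cntn: "b2i s0 + b2i sk + b2i sn + b2i c2n \<ge> 2"
    and bnd: "2 * (b2i s0 + b2i sk + b2i sn) + b1 + b2 \<le> 3 + b2i t1 + b2i t2 + b2i (t1 \<and> t2)"
    and t1: "t1 \<Longrightarrow> k = 1" and t2: "t2 \<Longrightarrow> n - 1 = Suc k"
  shows "\<exists>S \<subseteq> {..<n}. (\<forall>v<n. sat S v) \<and> 2 * int (card S) \<le> int n + int (ears {..<n})"
proof -
  have R0n: "R 0 (n - 1)" using first_last n3 by auto
  obtain S1 where S1: "S1 \<subseteq> {0<..<k}"
    "\<forall>v\<in>{0<..<k}. sat (S1 \<union> {x. x = 0 \<and> s0} \<union> {x. x = k \<and> sk}) v"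
    "c10 \<longrightarrow> (\<exists>u\<in>S1. R 0 u)" "c1k \<longrightarrow> (\<exists>u\<in>S1. R k u)"
    "2 * int (card S1) \<le> int (card {0<..<k}) + int (ears {0<..<k}) + b1"
    using r1 unfolding realizes_def by blast
  obtain S2 where S2: "S2 \<subseteq> {k<..<n-1}"
    "\<forall>v\<in>{k<..<n-1}. sat (S2 \<union> {x. x = k \<and> sk} \<union> {x. x = n-1 \<and> sn}) v"
    "c2k \<longrightarrow> (\<exists>u\<in>S2. R k u)" "c2n \<longrightarrow> (\<exists>u\<in>S2. R (n-1) u)"
    "2 * int (card S2) \<le> int (card {k<..<n-1}) + int (ears {k<..<n-1}) + b2"
    using r2 unfolding realizes_def by blast
  define S' where "S' = S1 \<union> S2 \<union> {x. x = k \<and> sk}"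
  define T where "T = S' \<union> {x. x = 0 \<and> s0} \<union> {x. x = n - 1 \<and> sn}"
  have S'sub: "S' \<subseteq> {0<..<n-1}" using S1(1) S2(1) k0 kn by (auto simp: S'_def)
  have Tsub: "T \<subseteq> {..<n}" using S'sub n3 by (fastforce simp: T_def subset_iff)
  have satI1: "sat T v" if v: "v \<in> {0<..<k}" for v
  proof (rule sat_local[where A="{0..k}"])
    show "insert v (nb v) \<subseteq> {0..k}" using nb_inside[OF R0k] v by auto
    show "T \<inter> {0..k} = (S1 \<union> {x. x = 0 \<and> s0} \<union> {x. x = k \<and> sk}) \<inter> {0..k}"
      using S1(1) S2(1) k0 kn by (auto simp: T_def S'_def)
    show "sat (S1 \<union> {x. x = 0 \<and> s0} \<union> {x. x = k \<and> sk}) v" using S1(2) v by blast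
  qed
  have satI2: "sat T v" if v: "v \<in> {k<..<n-1}" for v
  proof (rule sat_local[where A="{k..n-1}"])
    show "insert v (nb v) \<subseteq> {k..n-1}" using nb_inside[OF Rkn] v by auto
    show "T \<inter> {k..n-1} = (S2 \<union> {x. x = k \<and> sk} \<union> {x. x = n-1 \<and> sn}) \<inter> {k..n-1}"
      using S1(1) S2(1) k0 kn by (auto simp: T_def S'_def)
    show "sat (S2 \<union> {x. x = k \<and> sk} \<union> {x. x = n-1 \<and> sn}) v" using S2(2) v by blast
  qed
  have disj: "S1 \<inter> S2 = {}" using S1(1) S2(1) by (fastforce simp: subset_iff)
  obtain u1 where u1: "c1k \<Longrightarrow> u1 \<in> S1 \<and> R k u1" using S1(4) by blast
  obtain u2 where u2: "c2k \<Longrightarrow> u2 \<in> S2 \<and> R k u2" using S2(3) by blast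
  obtain u0 where u0: "c10 \<Longrightarrow> u0 \<in> S1 \<and> R 0 u0" using S1(3) by blast
  obtain un where un: "c2n \<Longrightarrow> un \<in> S2 \<and> R (n-1) un" using S2(4) by blast
  have satk: "sat T k"
    unfolding sat_def
  proof (rule sat_from[where pa=sk and xa=k and pb=s0 and xb=0 and pc=sn and xc="n-1" and pd=c1k and xd=u1
        and pe=c2k and xe=u2])
    show "b2i sk + b2i s0 + b2i sn + b2i c1k + b2i c2k \<ge> 2" using cntk by simp
    show "finite (insert k (nb k) \<inter> T)" by simp
  qed (use k0 kn R0k Rkn Rsym u1 u2 S1(1) S2(1) disj in \<open>auto simp: T_def S'_def nb_def\<close>)
  have sat0: "sat T 0"
    unfolding sat_def
  proof (rule sat_from[where pa=s0 and xa=0 and pb=sk and xb=k and pc=sn and xc="n-1" and pd=c10 and xd=u0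
        and pe=False and xe=0])
    show "b2i s0 + b2i sk + b2i sn + b2i c10 + b2i False \<ge> 2" using cnt0 by (simp add: b2i_def)
    show "finite (insert 0 (nb 0) \<inter> T)" by simp
  qed (use k0 kn R0k R0n Rsym u0 S1(1) S2(1) disj in \<open>auto simp: T_def S'_def nb_def\<close>)
  have satn: "sat T (n-1)"
    unfolding sat_def
  proof (rule sat_from[where pa=sn and xa="n-1" and pb=sk and xb=k and pc=s0 and xc=0 and pd=c2n and xd=un
        and pe=False and xe=0])
    show "b2i sn + b2i sk + b2i s0 + b2i c2n + b2i False \<ge> 2" using cntn by (simp add: b2i_def)
    show "finite (insert (n-1) (nb (n-1)) \<inter> T)" by simp
  qed (use k0 kn Rkn R0n Rsym un S1(1) S2(1) disj in \<open>auto simp: T_def S'_def nb_def\<close>)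
  have satall: "\<forall>v<n. sat T v"
  proof (intro allI impI)
    fix v assume v: "v < n"
    consider "v = 0" | "v \<in> {0<..<k}" | "v = k" | "v \<in> {k<..<n-1}" | "v = n - 1" using v by fastforce
    then show "sat T v" using satI1 satI2 satk sat0 satn by cases auto
  qed
  have cS': "card S' = card S1 + card S2 + (if sk then 1 else 0)"
    unfolding S'_def by (rule card_S3[OF S1(1) S2(1)])
  have finS': "finite S'" using S'sub finite_subset by blast
  have cT: "card T = card S' + (if s0 then 1 else 0) + (if sn then 1 else 0)"
  proof -
    have "card T = card S' + card ({x. x = 0 \<and> s0} \<union> {x. x = n - 1 \<and> sn})"
      unfolding T_def Un_assoc by (rule card_Un_disjoint) (use finS' S'sub in auto)
    also have "card ({x. x = 0 \<and> s0} \<union> {x. x = n - 1 \<and> sn}) = (if s0 then 1 else 0) + (if sn then 1 else 0)"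
      using n3 by (cases s0; cases sn; auto)
    finally show ?thesis by simp
  qed
  have cI: "card {0<..<k} + card {k<..<n-1} + 3 = n" using k0 kn by simp
  have eI: "int (ears {0<..<k}) + int (ears {k<..<n-1}) + b2i t1 + b2i t2 + b2i (t1 \<and> t2) \<le> int (ears {..<n})"
  proof -
    let ?A = "{v\<in>{0<..<k}. deg v = 2}" and ?B = "{v\<in>{k<..<n-1}. deg v = 2}"
    let ?C = "{x. (x = 0 \<and> t1) \<or> (x = n - 1 \<and> t2) \<or> (x = k \<and> t1 \<and> t2)}"
    have d0: "t1 \<Longrightarrow> deg 0 = 2" using end0 n3 Rkn t1 by auto
    have dn: "t2 \<Longrightarrow> deg (n-1) = 2"
    proof -
      assume "t2" then have "k = n - 2" using t2 by arith
      then show ?thesis using endn n3 R0k by simp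
    qed
    have dk: "t1 \<Longrightarrow> t2 \<Longrightarrow> deg k = 2" using ear_apex[OF R0k Rkn R0n] t1 t2 by auto
    have sub: "?A \<union> ?B \<union> ?C \<subseteq> {v\<in>{..<n}. deg v = 2}" using k0 kn d0 dn dk by auto
    have cC: "int (card ?C) = b2i t1 + b2i t2 + b2i (t1 \<and> t2)"
      using k0 kn by (cases t1; cases t2; auto simp: b2i_def Collect_disj_eq)
    have "card (?A \<union> ?B \<union> ?C) = card ?A + card ?B + card ?C"
      using k0 kn by (subst card_Un_disjoint; (subst card_Un_disjoint)?) auto
    moreover have "card (?A \<union> ?B \<union> ?C) \<le> card {v\<in>{..<n}. deg v = 2}"
      by (rule card_mono[OF _ sub]) auto
    ultimately show ?thesis using cC unfolding ears_def by auto
  qed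
  have "2 * int (card T) \<le> int n + int (ears {..<n})"
    using S1(5) S2(5) cS' cT cI eI bnd by (auto simp: b2i_def)
  thus ?thesis using Tsub satall by blast
qed

definition good :: "nat \<Rightarrow> nat \<Rightarrow> (st \<times> int) list \<Rightarrow> bool" where
  "good i j w \<longleftrightarrow> (\<forall>x\<in>set w. case x of ((si,sj,ci,cj),b) \<Rightarrow> realizes i j si sj ci cj b)"

lemma good_triv: "good i (Suc i) triv_prof"
  unfolding good_def triv_prof_def using trivial by auto

lemma realizes_mono: "realizes i j si sj ci cj b \<Longrightarrow> b \<le> b' \<Longrightarrow> realizes i j si sj ci cj b'"
  unfolding realizes_def by (meson order_trans add_left_mono)

lemma valid_sound:
  assumes ik: "i < k" and kj: "k < j" and Rik: "R i k" and Rkj: "R k j" and Rij: "R i j"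
    and g1: "good i k w1" and g2: "good k j w2"
    and e: "e = 0 \<or> (e = 1 \<and> deg k = 2)"
    and v: "valid w1 w2 e ((si,sj,ci,cj),b)"
  shows "realizes i j si sj ci cj b"
proof -
  from v obtain sk a1 k1 c1i c1k b1 k2 a2 c2k c2j b2 where
    m1: "((a1,k1,c1i,c1k),b1) \<in> set w1" and m2: "((k2,a2,c2k,c2j),b2) \<in> set w2" and
    c: "a1=si" "k1=sk" "k2=sk" "a2=sj" "b2i si + b2i sj + b2i sk + b2i c1k + b2i c2k \<ge> 2"
     "ci \<longrightarrow> c1i \<or> sk" "cj \<longrightarrow> c2j \<or> sk" "b1+b2+2*b2i sk - 1 - e \<le> b"
    unfolding valid_def list_ex_iff by fastforce
  have r1: "realizes i k si sk c1i c1k b1" using g1 m1 c unfolding good_def by fastforce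
  have r2: "realizes k j sk sj c2k c2j b2" using g2 m2 c unfolding good_def by fastforce
  show ?thesis
    by (rule realizes_mono[OF compose[OF ik kj Rik Rkj Rij r1 r2 c(5) c(6) c(7) e] c(8)])
qed

lemma poly_flag:
  "R i j \<Longrightarrow> i < j \<Longrightarrow> \<exists>w t. (w, t) \<in> set flagged \<and> good i j w \<and> (t \<longleftrightarrow> j = Suc i)"
proof (induction "j - i" arbitrary: i j rule: less_induct)
  case less
  show ?case
  proof (cases "j = Suc i")
    case True
    then show ?thesis using good_triv by (auto simp: flagged_def)
  next
    case False
    then have sij: "Suc i < j" using less.prems by auto
    obtain k where k: "i < k" "k < j" "R i k" "R k j" using apex[OF less.prems(1) sij] by blast
    have d1: "k - i < j - i" and d2: "j - k < j - i" using k by arith+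
    obtain w1 t1 where w1: "(w1, t1) \<in> set flagged" "good i k w1" "t1 \<longleftrightarrow> k = Suc i"
      using less.hyps[OF d1 k(3) k(1)] by blast
    obtain w2 t2 where w2: "(w2, t2) \<in> set flagged" "good k j w2" "t2 \<longleftrightarrow> j = Suc k"
      using less.hyps[OF d2 k(4) k(2)] by blast
    obtain w where w: "w \<in> set WW" "\<forall>x\<in>set w. valid w1 w2 (b2i (t1 \<and> t2)) x"
      using closed w1(1) w2(1) unfolding closed_chk_def list_all_iff list_ex_iff by fastforce
    have e: "b2i (t1 \<and> t2) = 0 \<or> (b2i (t1 \<and> t2) = 1 \<and> deg k = 2)"
      using ear_apex[OF k(3) k(4) less.prems(1)] w1(3) w2(3) by (auto simp: b2i_def)
    have "good i j w" unfolding good_def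
    proof
      fix x assume "x \<in> set w"
      then have vx: "valid w1 w2 (b2i (t1 \<and> t2)) x" using w(2) by blast
      obtain si sj ci cj b where x: "x = ((si,sj,ci,cj),b)" by (cases x) auto
      show "case x of ((si,sj,ci,cj),b) \<Rightarrow> realizes i j si sj ci cj b"
        using valid_sound[OF k(1) k(2) k(3) k(4) less.prems(1) w1(2) w2(2) e] vx x by simp
    qed
    then show ?thesis using w(1) False by (auto simp: flagged_def)
  qed
qed

theorem poly_main:
  assumes n3: "3 \<le> n"
  shows "\<exists>S \<subseteq> {..<n}. (\<forall>v<n. sat S v) \<and> 2 * int (card S) \<le> int n + int (ears {..<n})"
proof -
  have R0n: "R 0 (n - 1)" using first_last n3 by auto
  have sn: "Suc 0 < n - 1" using n3 by arith
  obtain k where k: "0 < k" "k < n - 1" "R 0 k" "R k (n - 1)" using apex[OF R0n sn] by blast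
  obtain w1 t1 where w1: "(w1, t1) \<in> set flagged" "good 0 k w1" "t1 \<longleftrightarrow> k = Suc 0"
    using poly_flag[of 0 k] k by auto
  obtain w2 t2 where w2: "(w2, t2) \<in> set flagged" "good k (n - 1) w2" "t2 \<longleftrightarrow> n - 1 = Suc k"
    using poly_flag[of k "n - 1"] k by auto
  from topc w1(1) w2(1) obtain s0 sk sn a1 k1 c10 c1k b1 k2 a2 c2k c2n b2 where
    m1: "((a1,k1,c10,c1k),b1) \<in> set w1" and m2: "((k2,a2,c2k,c2n),b2) \<in> set w2" and
    c: "a1=s0" "k1=sk" "k2=sk" "a2=sn" "b2i s0 + b2i sk + b2i sn + b2i c1k + b2i c2k \<ge> 2"
     "b2i s0 + b2i sk + b2i sn + b2i c10 \<ge> 2" "b2i s0 + b2i sk + b2i sn + b2i c2n \<ge> 2"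
     "2*(b2i s0 + b2i sk + b2i sn) + b1 + b2 \<le> 3 + b2i t1 + b2i t2 + b2i (t1 \<and> t2)"
    unfolding top_chk_def list_all_iff list_ex_iff by fastforce
  have r1: "realizes 0 k s0 sk c10 c1k b1" using w1(2) m1 c unfolding good_def by fastforce
  have r2: "realizes k (n - 1) sk sn c2k c2n b2" using w2(2) m2 c unfolding good_def by fastforce
  show ?thesis
    by (rule top_combine[OF n3 k r1 r2 _ c(6) c(7) c(8)]) (use c(5) w1(3) w2(3) in auto)
qed

end

theorem theorem3p5:
  fixes V :: "'a set" and E :: "'a \<Rightarrow> 'a \<Rightarrow> bool"
  assumes "maximal_outerplanar V E"
    and "card V \<ge> 3"
  shows "double_domination_number V E
           \<le> (card V + card {v \<in> V. degree V E v = 2}) div 2"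
proof -
  define n where "n = card V"
  have mo: "outerplanar V E" and mx: "\<forall>u\<in>V. \<forall>v\<in>V. u \<noteq> v \<and> \<not> E u v \<longrightarrow> \<not> outerplanar V (add_edge E u v)"
    using assms(1) unfolding maximal_outerplanar_def by auto
  have sg: "simple_graph V E" using mo unfolding outerplanar_def by auto
  have finV: "finite V" using sg unfolding simple_graph_def by auto
  have Esg: "\<And>u v. E u v \<Longrightarrow> u \<in> V \<and> v \<in> V \<and> u \<noteq> v \<and> E v u" using sg unfolding simple_graph_def by auto
  obtain f :: "'a \<Rightarrow> nat" where fb: "bij_betw f V {..<n}" and
    nc: "\<And>a b c d. E a b \<Longrightarrow> E c d \<Longrightarrow> \<not> (f a < f c \<and> f c < f b \<and> f b < f d)"
    using mo unfolding outerplanar_def n_def by blast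
  define g where "g = inv_into V f"
  have gb: "bij_betw g {..<n} V" unfolding g_def by (rule bij_betw_inv_into[OF fb])
  have gV: "\<And>i. i < n \<Longrightarrow> g i \<in> V" using gb bij_betwE by blast
  have fg: "\<And>i. i < n \<Longrightarrow> f (g i) = i" unfolding g_def using fb by (simp add: bij_betw_inv_into_right)
  have gf: "\<And>v. v \<in> V \<Longrightarrow> g (f v) = v" unfolding g_def using fb by (simp add: bij_betw_inv_into_left)
  have fV: "\<And>v. v \<in> V \<Longrightarrow> f v < n" using fb bij_betwE by blast
  have ginj: "inj_on g {..<n}" using gb bij_betw_def by blast
  define R where "R i j \<longleftrightarrow> i < n \<and> j < n \<and> E (g i) (g j)" for i j
  interpret P: poly n R
  proof
    fix i j assume "R i j" then show "i < n \<and> j < n \<and> i \<noteq> j" using Esg unfolding R_def by auto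
  next
    fix i j assume "R i j" then show "R j i" using Esg unfolding R_def by auto
  next
    fix a b c d assume "R a b" "R c d"
    then show "\<not> (a < c \<and> c < b \<and> b < d)" using nc[of "g a" "g b" "g c" "g d"] fg unfolding R_def by auto
  next
    fix i j assume ij: "i < n" "j < n" "i \<noteq> j" and H: "\<And>a b. R a b \<Longrightarrow> \<not>(a < i \<and> i < b \<and> b < j) \<and> \<not>(a < j \<and> j < b \<and> b < i)
         \<and> \<not>(i < a \<and> a < j \<and> j < b) \<and> \<not>(j < a \<and> a < i \<and> i < b)"
    show "R i j"
    proof (rule ccontr)
      assume nR: "\<not> R i j"
      define u where "u = g i"
      define v where "v = g j"
      have uv0: "u \<in> V" "v \<in> V" "f u = i" "f v = j" "\<not> E u v"
        using gV fg ij nR unfolding u_def v_def R_def by auto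
      have uv: "u \<in> V" "v \<in> V" "f u = i" "f v = j" "u \<noteq> v" "\<not> E u v"
        using uv0 ij(3) by auto
      have H': "\<And>a b. E a b \<Longrightarrow> \<not>(f a < i \<and> i < f b \<and> f b < j) \<and> \<not>(f a < j \<and> j < f b \<and> f b < i)
         \<and> \<not>(i < f a \<and> f a < j \<and> j < f b) \<and> \<not>(j < f a \<and> f a < i \<and> i < f b)"
      proof -
        fix a b assume ab: "E a b"
        have "R (f a) (f b)" using ab Esg fV gf unfolding R_def by auto
        then show "?thesis a b" by (rule H)
      qed
      have "outerplanar V (add_edge E u v)"
        unfolding outerplanar_def
      proof (intro conjI exI)
        show "simple_graph V (add_edge E u v)"
          using finV Esg uv unfolding simple_graph_def add_edge_def by auto
        show "bij_betw f V {..<card V}" using fb n_def by simp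
        show "\<forall>a b c d. add_edge E u v a b \<longrightarrow> add_edge E u v c d \<longrightarrow> \<not> (f a < f c \<and> f c < f b \<and> f b < f d)"
          unfolding add_edge_def using nc H' uv by (metis less_asym)
      qed
      then show False using mx uv by blast
    qed
  qed
  have n3: "3 \<le> n" using assms(2) n_def by simp
  obtain S' where S': "S' \<subseteq> {..<n}" "\<forall>v<n. P.sat S' v" "2 * int (card S') \<le> int n + int (P.ears {..<n})"
    using P.poly_main[OF n3] by blast
  define S where "S = g ` S'"
  have cS: "card S = card S'" unfolding S_def by (rule card_image[OF inj_on_subset[OF ginj S'(1)]])
  have nbimg: "g ` P.nb (f v) = {u \<in> V. E v u}" if v: "v \<in> V" for v
  proof
    show "g ` P.nb (f v) \<subseteq> {u \<in> V. E v u}" using gV gf v unfolding P.nb_def R_def by auto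
    show "{u \<in> V. E v u} \<subseteq> g ` P.nb (f v)"
    proof
      fix w assume w: "w \<in> {u \<in> V. E v u}"
      then have "f w \<in> P.nb (f v)" using gf fV v unfolding P.nb_def R_def by auto
      moreover have "w = g (f w)" using gf w by auto
      ultimately show "w \<in> g ` P.nb (f v)" by blast
    qed
  qed
  have nbsub: "insert (f v) (P.nb (f v)) \<subseteq> {..<n}" if "v \<in> V" for v using P.nb_sub fV that by auto
  have dd: "double_dominating V E S"
    unfolding double_dominating_def
  proof
    show "S \<subseteq> V" using S'(1) gV unfolding S_def by auto
    show "\<forall>v\<in>V. 2 \<le> card (closed_nbhd V E v \<inter> S)"
    proof
      fix v assume v: "v \<in> V"
      have "closed_nbhd V E v = g ` insert (f v) (P.nb (f v))"
        using nbimg[OF v] gf v unfolding closed_nbhd_def by auto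
      then have "closed_nbhd V E v \<inter> S = g ` (insert (f v) (P.nb (f v)) \<inter> S')"
        unfolding S_def using inj_on_image_Int[OF ginj nbsub[OF v] S'(1)] by simp
      moreover have "card (g ` (insert (f v) (P.nb (f v)) \<inter> S')) = card (insert (f v) (P.nb (f v)) \<inter> S')"
        by (rule card_image[OF inj_on_subset[OF ginj]]) (use S'(1) in auto)
      moreover have "P.sat S' (f v)" using S'(2) fV v by auto
      ultimately show "2 \<le> card (closed_nbhd V E v \<inter> S)" unfolding P.sat_def by simp
    qed
  qed
  have degeq: "degree V E v = P.deg (f v)" if v: "v \<in> V" for v
  proof -
    have "degree V E v = card (g ` P.nb (f v))" unfolding degree_def using nbimg[OF v] by simp
    also have "\<dots> = P.deg (f v)" unfolding P.deg_def
      by (rule card_image[OF inj_on_subset[OF ginj]]) (use P.nb_sub in auto)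
    finally show ?thesis .
  qed
  have tset: "{v \<in> V. degree V E v = 2} = g ` {i \<in> {..<n}. P.deg i = 2}"
  proof
    show "{v \<in> V. degree V E v = 2} \<subseteq> g ` {i \<in> {..<n}. P.deg i = 2}"
    proof
      fix v assume v: "v \<in> {v \<in> V. degree V E v = 2}"
      then have "f v \<in> {i \<in> {..<n}. P.deg i = 2}" using degeq fV by auto
      moreover have "v = g (f v)" using gf v by auto
      ultimately show "v \<in> g ` {i \<in> {..<n}. P.deg i = 2}" by blast
    qed
    show "g ` {i \<in> {..<n}. P.deg i = 2} \<subseteq> {v \<in> V. degree V E v = 2}"
      using gV degeq fg by auto
  qed
  have tcard: "card {v \<in> V. degree V E v = 2} = P.ears {..<n}"
    unfolding tset P.ears_def by (rule card_image[OF inj_on_subset[OF ginj]]) auto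
  have "double_domination_number V E \<le> card S"
    unfolding double_domination_number_def
  proof (rule Min_le)
    have "{card S |S. double_dominating V E S} \<subseteq> {..card V}"
      using finV by (auto simp: double_dominating_def intro: card_mono)
    then show "finite {card S |S. double_dominating V E S}" using finite_subset by blast
    show "card S \<in> {card S |S. double_dominating V E S}" using dd by blast
  qed
  moreover have "2 * card S \<le> card V + card {v \<in> V. degree V E v = 2}"
    using S'(3) cS tcard n_def by linarith
  ultimately show ?thesis by linarith
qed

end
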